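(* Let $r, a \in \mathbb{N}$ and $b, d \in \mathbb{Z}$ with $a \mid \mathrm{lcm}(b,d)$. Then for any completely multiplicative functions $f_1,\ldots,f_r:\mathbb{N}\to\mathbb{S}^1$, $$\liminf_{n\to\infty} \max_{1\le j\le r} |f_j(an+b)-f_j(an+d)| = 0.$$
   Context: $\mathbb{N}=\{1,2,\dots\}$, $\mathbb{S}^1$ the unit circle in $\mathbb{C}$; completely multiplicative means $f(mn)=f(m)f(n)$ for all $m,n\in\mathbb{N}$. Convention: $\mathrm{lcm}(b,0)=0$. *)

theory Defs
  imports "HOL-Analysis.Analysis"
begin

text \<open>A function on the positive integers, completely multiplicative, with values on the
unit circle. Values at 0 are irrelevant and unconstrained.\<close>
definition compl_mult_unimod :: "(nat \<Rightarrow> complex) \<Rightarrow> bool" where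
  "compl_mult_unimod f \<longleftrightarrow>
     (\<forall>m n. m \<ge> 1 \<longrightarrow> n \<ge> 1 \<longrightarrow> f (m * n) = f m * f n) \<and>
     (\<forall>n. n \<ge> 1 \<longrightarrow> cmod (f n) = 1)"

end

theory Submission
  imports Defs "HOL-Computational_Algebra.Primes"
begin

lemma W_exists:
  fixes A :: int
  assumes "A > 0" "K \<ge> 1"
  shows "\<exists>W::int set. finite W \<and> card W = K \<and> (\<forall>w\<in>W. w > 0) \<and>
           (\<forall>w\<in>W. \<forall>w'\<in>W. w < w' \<longrightarrow> A * (w' - w) dvd w)"
  using assms(2)
proof (induction K rule: dec_induct)
  case base
  show ?case by (rule exI[of _ "{1}"]) auto
next
  case (step K)
  then obtain W where W: "finite W" "card W = K" "\<forall>w\<in>W. w > 0"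
    "\<forall>w\<in>W. \<forall>w'\<in>W. w < w' \<longrightarrow> A * (w' - w) dvd w" by blast
  define L where "L = A * prod id W"
  have dvdL: "s dvd prod id W" if "s \<in> W" for s
    using W(1) that by (metis dvd_prodI id_apply)
  have Lpos: "L > 0" unfolding L_def using assms(1) W(3)
    by (simp add: prod_pos)
  define W' where "W' = insert L ((+) L ` W)"
  have notin: "L \<notin> (+) L ` W" using W(3) by auto
  have "card W' = Suc K" unfolding W'_def using notin W(1,2)
    by (simp add: card_image)
  moreover have "finite W'" unfolding W'_def using W(1) by simp
  moreover have "\<forall>w\<in>W'. w > 0" unfolding W'_def using Lpos W(3) by auto
  moreover have "\<forall>w\<in>W'. \<forall>w'\<in>W'. w < w' \<longrightarrow> A * (w' - w) dvd w"
  proof (intro ballI impI)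
    fix w w' assume ww: "w \<in> W'" "w' \<in> W'" "w < w'"
    show "A * (w' - w) dvd w"
    proof (cases "w = L")
      case True
      then obtain s where s: "s \<in> W" "w' = L + s" using ww W(3) unfolding W'_def by auto
      have "A * s dvd L" unfolding L_def using dvdL[OF s(1)] by simp
      then show ?thesis using True s by simp
    next
      case False
      then obtain s where s: "s \<in> W" "w = L + s" using ww unfolding W'_def by auto
      have "w' \<noteq> L" using ww s W(3) by auto
      then obtain s' where s': "s' \<in> W" "w' = L + s'" using ww unfolding W'_def by auto
      have "s < s'" using s s' ww by simp
      then have d1: "A * (s' - s) dvd s" using W(4) s s' by blast
      have "(s' - s) dvd s" using d1 by (rule dvd_mult_right)
      then have "(s' - s) dvd prod id W" using dvdL[OF s(1)] by (rule dvd_trans)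
      then have "A * (s' - s) dvd L" unfolding L_def by simp
      then show ?thesis using d1 s s' by simp
    qed
  qed
  ultimately show ?case by blast
qed


lemma split_pow:
  fixes G m :: int
  assumes "G > 0"
  shows "\<exists>X Y. G = X * Y \<and> X > 0 \<and> Y > 0 \<and> coprime Y m \<and> (\<exists>k. X dvd m ^ k)"
  using assms
proof (induction "nat G" arbitrary: G rule: less_induct)
  case less
  show ?case
  proof (cases "gcd G m = 1")
    case True
    then have "G = 1 * G \<and> (1::int) > 0 \<and> G > 0 \<and> coprime G m \<and> ((1::int) dvd m ^ 0)"
      using less.prems by (simp add: coprime_iff_gcd_eq_1)
    then show ?thesis by blast
  next
    case False
    define g where "g = gcd G m"
    have gpos: "g > 0" unfolding g_def using less.prems by simp
    then have g2: "g \<ge> 2" using False g_def by linarith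
    obtain G' where G': "G = g * G'" unfolding g_def by (meson gcd_dvd1 dvdE)
    have G'pos: "G' > 0" using G' gpos less.prems by (simp add: zero_less_mult_iff)
    have "2 * G' \<le> g * G'" using g2 G'pos by (intro mult_right_mono) auto
    then have "G' < G" using G' G'pos by linarith
    then have "nat G' < nat G" using G'pos by simp
    from less.hyps[OF this G'pos] obtain X Y k where XY: "G' = X * Y" "X > 0" "Y > 0"
      "coprime Y m" "X dvd m ^ k" by blast
    have "g dvd m" unfolding g_def by simp
    then have "g * X dvd m * m ^ k" using XY(5) by (rule mult_dvd_mono)
    then have d: "g * X dvd m ^ Suc k" by simp
    have "G = (g * X) * Y" using G' XY(1) by simp
    moreover have "g * X > 0" using gpos XY(2) by simp
    ultimately show ?thesis using XY(3,4) d by blast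
  qed
qed
lemma a_split:
  fixes a b d :: int
  assumes apos: "a > 0" and adv: "a dvd lcm b d"
  shows "\<exists>a1 a2. a = a1 * a2 \<and> a1 > 0 \<and> a2 > 0 \<and> coprime a1 a2 \<and> a1 dvd d \<and> a2 dvd b"
proof (cases "d = 0 \<or> b = 0")
  case True
  then show ?thesis
  proof
    assume "d = 0" then show ?thesis using apos by (intro exI[of _ a] exI[of _ 1]) auto
  next
    assume "b = 0" then show ?thesis using apos by (intro exI[of _ 1] exI[of _ a]) auto
  qed
next
  case False
  then have d0: "d \<noteq> 0" and b0: "b \<noteq> 0" by auto
  define g where "g = gcd a d"
  have gpos: "g > 0" unfolding g_def using apos by simp
  obtain e where ae: "a = g * e" unfolding g_def by (meson gcd_dvd1 dvdE)
  have epos: "e > 0" using ae gpos apos by (simp add: zero_less_mult_iff)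
  obtain X Y k where XY: "a = X * Y" "X > 0" "Y > 0" "coprime Y e" "X dvd e ^ k"
    using split_pow[OF apos, of e] by blast
  have cYek: "coprime Y (e ^ k)" using XY(4) by simp
  have cXY: "coprime Y X" using coprime_divisors[OF dvd_refl XY(5) cYek] .
  have "Y dvd g * e" using XY(1) ae by (metis dvd_triv_right)
  then have "Y dvd g" using XY(4) by (simp add: coprime_dvd_mult_left_iff)
  then have Yd: "Y dvd d" unfolding g_def by (meson dvd_trans gcd_dvd2)
  have Xb: "X dvd b"
  proof (rule multiplicity_le_imp_dvd)
    show "X \<noteq> 0" using XY(2) by simp
  next
    fix p :: int assume p: "prime p"
    show "multiplicity p X \<le> multiplicity p b"
    proof (cases "p dvd X")
      case False
      then show ?thesis by (simp add: not_dvd_imp_multiplicity_0)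
    next
      case True
      then have "p dvd e ^ k" using XY(5) by (rule dvd_trans)
      then have pe: "p dvd e" using p prime_dvd_power by blast
      have me: "multiplicity p e \<ge> 1"
        using pe p epos prime_elem_multiplicity_eq_zero_iff[of p e] prime_gt_0_int[OF p] by (simp add: prime_imp_prime_elem Suc_le_eq)
      have ma: "multiplicity p a = multiplicity p g + multiplicity p e"
        using ae prime_elem_multiplicity_mult_distrib[OF prime_imp_prime_elem[OF p], of g e] gpos epos by simp
      have mg: "multiplicity p g = min (multiplicity p a) (multiplicity p d)"
        unfolding g_def using multiplicity_gcd[of a d p] apos d0 p by simp
      have ml: "multiplicity p (lcm b d) = max (multiplicity p b) (multiplicity p d)"
        using multiplicity_lcm[of b d p] b0 d0 p by simp
      have "lcm b d \<noteq> 0" using b0 d0 by simp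
      then have "multiplicity p a \<le> multiplicity p (lcm b d)"
        using adv by (intro dvd_imp_multiplicity_le)
      moreover have "multiplicity p X \<le> multiplicity p a"
        using XY(1) apos by (intro dvd_imp_multiplicity_le) auto
      moreover have "multiplicity p d < multiplicity p a"
      proof (rule ccontr)
        assume "\<not> multiplicity p d < multiplicity p a"
        then have "multiplicity p g = multiplicity p a" using mg by simp
        then show False using ma me by linarith
      qed
      moreover have "multiplicity p a \<le> multiplicity p b"
        using calculation(1) ml \<open>multiplicity p d < multiplicity p a\<close> by (simp add: max_def split: if_splits)
      ultimately show ?thesis by linarith
    qed
  qed
  show ?thesis using XY Yd Xb cXY
    by (intro exI[of _ Y] exI[of _ X]) (auto simp: mult.commute coprime_commute)
qed
lemma floor_close:
  fixes x y :: real and M :: nat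
  assumes "M > 0" "\<lfloor>M * x\<rfloor> = \<lfloor>M * y\<rfloor>"
  shows "\<bar>x - y\<bar> < 1 / M"
proof -
  have "\<bar>M * x - M * y\<bar> < 1" using assms(2)
    by (metis abs_diff_less_iff floor_eq_iff floor_correct add.commute diff_less_eq less_diff_eq le_less_trans
        floor_less_cancel not_less)
  then have "M * \<bar>x - y\<bar> < 1" by (simp add: abs_mult right_diff_distrib[symmetric])
  then show ?thesis using assms(1) by (simp add: field_simps)
qed

lemma unimod_mult:
  assumes "compl_mult_unimod F" "m \<ge> 1" "n \<ge> 1"
  shows "F (m * n) = F m * F n" "cmod (F m) = 1"
  using assms unfolding compl_mult_unimod_def by auto

lemma f_est:
  fixes y z e h P Q :: int
  assumes F: "compl_mult_unimod F"
    and pos: "y > 0" "z > 0" "e > 0" "h > 0" "P > 0" "Q > 0"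
    and eqP: "P * e = (y + h) * z" and eqQ: "Q * e = y * (z + h)"
  shows "cmod (F (nat P) - F (nat Q)) =
         cmod (F (nat (y + h)) * cnj (F (nat y)) - F (nat (z + h)) * cnj (F (nat z)))"
proof -
  define R where "R t = F (nat (t + h)) * cnj (F (nat t))" for t
  have u: "cmod (F (nat t)) = 1" if "t > 0" for t using unimod_mult(2)[OF F, of "nat t" 1] that by simp
  have shift: "F (nat (t + h)) = R t * F (nat t)" if "t > 0" for t
  proof -
    have "F (nat t) * cnj (F (nat t)) = 1" using u[OF that]
      by (metis complex_norm_square of_real_1 power_one)
    then have "cnj (F (nat t)) * F (nat t) = 1" by (simp add: mult.commute)
    moreover have "R t * F (nat t) = F (nat (t + h)) * (cnj (F (nat t)) * F (nat t))"
      unfolding R_def by (simp add: mult.assoc)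
    ultimately show ?thesis by simp
  qed
  have natmul: "nat (s * t) = nat s * nat t" if "s > 0" "t > 0" for s t :: int
    using that by (simp add: nat_mult_distrib)
  have m: "F (nat (s * t)) = F (nat s) * F (nat t)" if "s > 0" "t > 0" for s t :: int
    using that natmul[OF that] unimod_mult(1)[OF F, of "nat s" "nat t"] by simp
  have fP: "F (nat P) * F (nat e) = F (nat (y + h)) * F (nat z)"
    using m[of P e] m[of "y + h" z] eqP pos by simp
  have fQ: "F (nat Q) * F (nat e) = F (nat y) * F (nat (z + h))"
    using m[of Q e] m[of y "z + h"] eqQ pos by simp
  have "cmod (F (nat P) - F (nat Q)) = cmod ((F (nat P) - F (nat Q)) * F (nat e))"
    using u[OF pos(3)] by (simp add: norm_mult)
  also have "(F (nat P) - F (nat Q)) * F (nat e) = F (nat (y + h)) * F (nat z) - F (nat y) * F (nat (z + h))"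
    using fP fQ by (simp add: algebra_simps)
  also have "\<dots> = F (nat y) * F (nat z) * (R y - R z)"
    using shift[OF pos(1)] shift[OF pos(2)] by (simp add: algebra_simps)
  also have "cmod \<dots> = cmod (R y - R z)"
    using u[OF pos(1)] u[OF pos(2)] by (simp add: norm_mult)
  finally show ?thesis unfolding R_def .
qed
lemma core:
  fixes a r :: nat and b d :: int and f :: "nat \<Rightarrow> nat \<Rightarrow> complex" and \<epsilon> :: real and N :: nat
  assumes a1: "a \<ge> 1" and adv: "int a dvd lcm b d" and bd: "d < b"
    and fj: "\<And>j. j \<in> {1..r} \<Longrightarrow> compl_mult_unimod (f j)" and eps: "\<epsilon> > 0"
  shows "\<exists>n\<ge>N. \<forall>j\<in>{1..r}. cmod (f j (nat (int a * int n + b)) - f j (nat (int a * int n + d))) < \<epsilon>"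
proof -
  define h where "h = b - d"
  have hpos: "h > 0" using bd h_def by simp
  have apos: "int a > 0" using a1 by simp
  obtain a1 a2 where asp: "int a = a1 * a2" "a1 > 0" "a2 > 0" "coprime a1 a2" "a1 dvd d" "a2 dvd b"
    using a_split[OF apos adv] by blast
  define M :: nat where "M = nat \<lceil>2 / \<epsilon>\<rceil> + 1"
  have Mpos: "M > 0" unfolding M_def by simp
  have Meps: "2 / real M \<le> \<epsilon>"
  proof -
    have "2 / \<epsilon> \<le> real M" unfolding M_def by linarith
    then show ?thesis using eps Mpos by (simp add: field_simps)
  qed
  define Gr where "Gr = {- int M..int M} \<times> {- int M..int M}"
  define Bk where "Bk = PiE {1..r} (\<lambda>_. Gr)"
  have finBk: "finite Bk" unfolding Bk_def Gr_def by (intro finite_PiE) auto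
  define K where "K = card Bk + 1"
  obtain W where W: "finite W" "card W = K" "\<forall>w\<in>W. w > 0"
    "\<forall>w\<in>W. \<forall>w'\<in>W. w < w' \<longrightarrow> int a * (w' - w) dvd w"
    using W_exists[OF apos, of K] unfolding K_def by auto
  define G where "G = prod id W"
  have Gpos: "G > 0" unfolding G_def using W(3) by (simp add: prod_pos)
  obtain X Y k where XY: "G = X * Y" "X > 0" "Y > 0" "coprime Y a2" "X dvd a2 ^ k"
    using split_pow[OF Gpos, of a2] by blast
  define U where "U = Y * a1"
  define V where "V = X * a2"
  have cUV: "coprime U V"
  proof -
    have c1: "coprime Y (a2 ^ k)" using XY(4) by simp
    have "coprime Y X" using coprime_divisors[OF dvd_refl XY(5) c1] .
    moreover have "coprime a1 X"
      using coprime_divisors[OF dvd_refl XY(5)] asp(4) by simp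
    ultimately show ?thesis unfolding U_def V_def using XY(4) asp(4)
      by (simp add: coprime_commute)
  qed
  have UVpos: "U > 0" "V > 0" unfolding U_def V_def using XY asp by auto
  obtain s t where st: "s * U + t * V = 1"
    using bezout_int[of U V] cUV by (auto simp: coprime_iff_gcd_eq_1)
  define c0 where "c0 = - h * s * U"
  define T where "T = \<bar>c0\<bar> + \<bar>d\<bar> + int a * int N + 1"
  define c where "c = c0 + U * V * T"
  have cU: "U dvd c" unfolding c_def c0_def by simp
  have cV: "V dvd c + h"
  proof -
    have "c + h = h * t * V + U * V * T" unfolding c_def c0_def
      using st by (simp add: algebra_simps) (metis add_diff_cancel_left' add_diff_eq mult.commute mult.left_commute distrib_left mult.right_neutral)
    then show ?thesis by simp
  qed
  have cbig: "c \<ge> \<bar>d\<bar> + int a * int N + 1"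
  proof -
    have "U * V \<ge> 1" using UVpos by (simp add: int_one_le_iff_zero_less)
    moreover have "T \<ge> 0" unfolding T_def by simp
    ultimately have "U * V * T \<ge> T" by (metis mult_le_cancel_right1 not_le order.strict_trans1 mult_nonneg_nonneg zero_le_one order_refl le_less) 
    then show ?thesis unfolding c_def T_def by linarith
  qed
  have cpos: "c > 0" using cbig by (smt (verit) of_nat_0_le_iff mult_nonneg_nonneg)
  define R where "R j t = f j (nat (t + h)) * cnj (f j (nat t))" for j t
  have Runi: "cmod (R j t) = 1" if "j \<in> {1..r}" "t > 0" for j t
  proof -
    have "nat t \<ge> 1" "nat (t + h) \<ge> 1" using that hpos by auto
    then show ?thesis unfolding R_def using unimod_mult(2)[OF fj[OF that(1)]] by (simp add: norm_mult)
  qed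
  define \<beta> where "\<beta> w = restrict (\<lambda>j. (\<lfloor>M * Re (R j (c + w))\<rfloor>, \<lfloor>M * Im (R j (c + w))\<rfloor>)) {1..r}" for w
  have bnd: "\<lfloor>real M * x\<rfloor> \<in> {- int M..int M}" if "\<bar>x\<bar> \<le> 1" for x
  proof -
    have "\<bar>real M * x\<bar> \<le> real M" using that by (simp add: abs_mult mult_left_le)
    then have "- real M \<le> real M * x" "real M * x \<le> real M" by linarith+
    then show ?thesis by (auto simp: le_floor_iff floor_le_iff)
  qed
  have img: "\<beta> ` W \<subseteq> Bk"
  proof
    fix v assume "v \<in> \<beta> ` W"
    then obtain w where w: "w \<in> W" "v = \<beta> w" by auto
    have "(\<lfloor>M * Re (R j (c + w))\<rfloor>, \<lfloor>M * Im (R j (c + w))\<rfloor>) \<in> Gr" if "j \<in> {1..r}" for j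
    proof -
      have "c + w > 0" using cpos W(3) w by auto
      then have "cmod (R j (c + w)) = 1" using Runi that by blast
      then have "\<bar>Re (R j (c + w))\<bar> \<le> 1" "\<bar>Im (R j (c + w))\<bar> \<le> 1"
        using abs_Re_le_cmod abs_Im_le_cmod by metis+
      then show ?thesis unfolding Gr_def using bnd by blast
    qed
    then show "v \<in> Bk" unfolding Bk_def w \<beta>_def by auto
  qed
  have "card (\<beta> ` W) \<le> card Bk" using card_mono[OF finBk img] .
  then have "card (\<beta> ` W) < card W" using W(2) unfolding K_def by simp
  then have "\<not> inj_on \<beta> W" using pigeonhole by blast
  then obtain w1 w2 where w12: "w1 \<in> W" "w2 \<in> W" "w1 \<noteq> w2" "\<beta> w1 = \<beta> w2"
    unfolding inj_on_def by blast
  then obtain w w' where ww: "w \<in> W" "w' \<in> W" "w < w'" "\<beta> w = \<beta> w'"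
    by (metis linorder_neqE)
  define e where "e = w' - w"
  have epos: "e > 0" unfolding e_def using ww by simp
  have aew: "int a * e dvd w" unfolding e_def using W(4) ww by blast
  have ew: "e dvd w" using aew by (rule dvd_mult_right)
  have ew': "e dvd w'" using ew unfolding e_def by (metis dvd_add dvd_refl diff_add_cancel)
  have eG: "e dvd G" unfolding G_def using ew W(1) ww(1) by (metis dvd_prodI id_apply dvd_trans)
  obtain e2 e1 where e12: "e = e2 * e1" "e2 dvd X" "e1 dvd Y"
    using division_decomp[of e X Y] eG XY(1) by auto
  define y where "y = c + w"
  define z where "z = c + w'"
  have ypos: "y > 0" "z > 0" unfolding y_def z_def using cpos W(3) ww by auto
  have aa1: "a1 dvd int a" "a2 dvd int a" using asp(1) by auto
  have eaw: "e * int a dvd w" using aew by (simp add: mult.commute)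
  have e1e: "e1 dvd e" "e2 dvd e" using e12(1) by simp_all
  have XV: "X dvd V" and YU: "Y dvd U" unfolding U_def V_def by simp_all
  have i: "e1 * a1 dvd y"
  proof -
    have "e1 * a1 dvd U" unfolding U_def using e12(3) by (rule mult_dvd_mono) simp
    then have "e1 * a1 dvd c" using cU by (rule dvd_trans)
    moreover have "e1 * a1 dvd e * int a" using e1e(1) aa1(1) by (rule mult_dvd_mono)
    then have "e1 * a1 dvd w" using eaw by (rule dvd_trans)
    ultimately show ?thesis unfolding y_def by simp
  qed
  have ii: "e2 dvd z + h"
  proof -
    have "e2 dvd c + h" using dvd_trans[OF e12(2) dvd_trans[OF XV cV]] .
    moreover have "e2 dvd w'" using dvd_trans[OF e1e(2) ew'] .
    ultimately have "e2 dvd (c + h) + w'" by simp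
    then show ?thesis unfolding z_def by (simp add: algebra_simps)
  qed
  have iii: "e2 * a2 dvd y + h"
  proof -
    have "e2 * a2 dvd V" unfolding V_def using e12(2) by (rule mult_dvd_mono) simp
    then have "e2 * a2 dvd c + h" using cV by (rule dvd_trans)
    moreover have "e2 * a2 dvd e * int a" using e1e(2) aa1(2) by (rule mult_dvd_mono)
    then have "e2 * a2 dvd w" using eaw by (rule dvd_trans)
    ultimately have "e2 * a2 dvd (c + h) + w" by simp
    then show ?thesis unfolding y_def by (simp add: algebra_simps)
  qed
  have iv: "e1 dvd z"
  proof -
    have "e1 dvd c" using dvd_trans[OF e12(3) dvd_trans[OF YU cU]] .
    moreover have "e1 dvd w'" using dvd_trans[OF e1e(1) ew'] .
    ultimately show ?thesis unfolding z_def by simp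
  qed
  have dQ: "e * a1 dvd y * (z + h)"
  proof -
    have "(e1 * a1) * e2 dvd y * (z + h)" using i ii by (rule mult_dvd_mono)
    then show ?thesis using e12(1) by (simp add: ac_simps)
  qed
  have dP: "e * a2 dvd (y + h) * z"
  proof -
    have "(e2 * a2) * e1 dvd (y + h) * z" using iii iv by (rule mult_dvd_mono)
    then show ?thesis using e12(1) by (simp add: ac_simps)
  qed
  obtain Q where Q: "y * (z + h) = e * a1 * Q" using dQ by (auto elim: dvdE)
  obtain P where P: "(y + h) * z = e * a2 * P" using dP by (auto elim: dvdE)
  define Qn where "Qn = a1 * Q"
  define Pn where "Pn = a2 * P"
  have eqQ: "Qn * e = y * (z + h)" unfolding Qn_def using Q by (simp add: ac_simps)
  have eqP: "Pn * e = (y + h) * z" unfolding Pn_def using P by (simp add: ac_simps)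
  have ez: "z = y + e" unfolding y_def z_def e_def by simp
  have "Pn * e = (Qn + h) * e" using eqP eqQ ez by (simp add: algebra_simps)
  then have PQ: "Pn = Qn + h" using epos by simp
  have Qge: "Qn \<ge> y"
  proof -
    have "y * e \<le> y * (z + h)" using ypos hpos ez epos by (intro mult_left_mono) auto
    then have "y * e \<le> Qn * e" using eqQ by simp
    then show ?thesis using epos by (simp add: mult_le_cancel_right)
  qed
  have cong: "int a dvd Qn - d"
  proof -
    have "a1 dvd Qn - d" unfolding Qn_def using asp(5) by simp
    moreover have "a2 dvd Pn - b" unfolding Pn_def using asp(6) by simp
    then have "a2 dvd Qn - d" using PQ h_def by (simp add: algebra_simps)
    ultimately show ?thesis using asp(1,4) by (simp add: divides_mult)
  qed
  then obtain n0 where n0: "Qn - d = int a * n0" by (auto elim: dvdE)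
  have "Qn - d \<ge> int a * int N + 1" proof -
    have "w > 0" using W(3) ww(1) by blast
    then show ?thesis using Qge cbig abs_ge_minus_self[of d] unfolding y_def by linarith
  qed
  then have "int a * n0 > int a * int N" using n0 by simp
  then have n0N: "n0 > int N" using apos by (simp add: mult_less_cancel_left)
  define n where "n = nat n0"
  have nN: "n \<ge> N" unfolding n_def using n0N by simp
  have Qeq: "int a * int n + d = Qn" unfolding n_def using n0 n0N by simp
  have Peq: "int a * int n + b = Pn" using Qeq PQ h_def by simp
  have Qpos: "Qn > 0" using Qge ypos by simp
  have Ppos: "Pn > 0" using PQ Qpos hpos by simp
  have "cmod (f j (nat (int a * int n + b)) - f j (nat (int a * int n + d))) < \<epsilon>" if j: "j \<in> {1..r}" for j
  proof -
    have "cmod (f j (nat (int a * int n + b)) - f j (nat (int a * int n + d))) = cmod (R j y - R j z)"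
      unfolding Peq Qeq R_def using f_est[OF fj[OF j] ypos epos hpos Ppos Qpos eqP eqQ] .
    also have "\<dots> < \<epsilon>"
    proof -
      have b1: "\<lfloor>M * Re (R j y)\<rfloor> = \<lfloor>M * Re (R j z)\<rfloor>" "\<lfloor>M * Im (R j y)\<rfloor> = \<lfloor>M * Im (R j z)\<rfloor>"
        using fun_cong[OF ww(4), of j] j unfolding \<beta>_def y_def z_def by auto
      have "\<bar>Re (R j y) - Re (R j z)\<bar> < 1 / M" "\<bar>Im (R j y) - Im (R j z)\<bar> < 1 / M"
        using floor_close[OF Mpos b1(1)] floor_close[OF Mpos b1(2)] by auto
      then have "cmod (R j y - R j z) < 2 / M" using cmod_le[of "R j y - R j z"] by simp
      then show ?thesis using Meps by linarith
    qed
    finally show ?thesis .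
  qed
  then show ?thesis using nN by blast
qed

theorem corollary1p3:
  fixes r a :: nat and b d :: int and f :: "nat \<Rightarrow> nat \<Rightarrow> complex"
  assumes "r \<ge> 1" and "a \<ge> 1"
    and "int a dvd lcm b d"
    and "\<And>j. j \<in> {1..r} \<Longrightarrow> compl_mult_unimod (f j)"
  shows "liminf (\<lambda>n::nat. ereal (Max ((\<lambda>j. cmod (f j (nat (int a * int n + b))
                                      - f j (nat (int a * int n + d)))) ` {1..r}))) = 0"
proof -
  define X where "X n = Max ((\<lambda>j. cmod (f j (nat (int a * int n + b))
                                      - f j (nat (int a * int n + d)))) ` {1..r})" for n
  have ne: "{1..r} \<noteq> {}" using assms(1) by simp
  have Xnn: "X n \<ge> 0" for n
  proof -
    have "cmod (f 1 (nat (int a * int n + b)) - f 1 (nat (int a * int n + d))) \<le> X n"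
      unfolding X_def using assms(1) by (intro Max_ge) auto
    then show ?thesis by (meson norm_ge_zero order_trans)
  qed
  have small: "\<exists>n\<ge>N. X n < \<epsilon>" if eps: "\<epsilon> > 0" for \<epsilon> :: real and N
  proof (cases "b = d")
    case True
    then have "X N = 0" unfolding X_def using ne by simp
    then show ?thesis using eps by auto
  next
    case False
    have "\<exists>n\<ge>N. \<forall>j\<in>{1..r}. cmod (f j (nat (int a * int n + b)) - f j (nat (int a * int n + d))) < \<epsilon>"
    proof (cases "d < b")
      case True
      then show ?thesis using core[of a b d r f \<epsilon> N] assms(2,3,4) True eps by blast
    next
      case False
      then have "b < d" using \<open>b \<noteq> d\<close> by simp
      moreover have "int a dvd lcm d b" using assms(3) by (simp add: lcm.commute)
      ultimately obtain n where "n \<ge> N" "\<forall>j\<in>{1..r}. cmod (f j (nat (int a * int n + d)) - f j (nat (int a * int n + b))) < \<epsilon>"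
        using core[of a d b r f \<epsilon> N] assms(2,4) eps by blast
      then show ?thesis by (auto simp: norm_minus_commute)
    qed
    then obtain n where "n \<ge> N" "\<forall>j\<in>{1..r}. cmod (f j (nat (int a * int n + b)) - f j (nat (int a * int n + d))) < \<epsilon>"
      by blast
    then show ?thesis unfolding X_def using ne by (intro exI[of _ n]) (auto simp: Max_less_iff)
  qed
  have "liminf (\<lambda>n. ereal (X n)) \<le> 0"
    unfolding liminf_SUP_INF
  proof (rule SUP_least)
    fix N :: nat
    show "(INF m\<in>{N..}. ereal (X m)) \<le> 0"
    proof (rule ereal_le_epsilon2)
      fix e :: real assume e: "e > 0"
      obtain n where n: "n \<ge> N" "X n < e" using small[OF e] by blast
      have "(INF m\<in>{N..}. ereal (X m)) \<le> ereal (X n)" using n(1) by (intro INF_lower) simp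
      also have "\<dots> \<le> 0 + ereal e" using n(2) by simp
      finally show "(INF m\<in>{N..}. ereal (X m)) \<le> 0 + ereal e" .
    qed
  qed
  moreover have "0 \<le> liminf (\<lambda>n. ereal (X n))"
    by (rule Liminf_bounded) (simp add: Xnn)
  ultimately show ?thesis unfolding X_def by simp
qed
end
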